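(* Let $(\mathcal{S},\mathcal{A},\tau,\mu_0,R,\gamma)$ be an MDP and let $\preceq^\xi_{\star,R}$ be the relation on possible initial trajectories given by $\xi_1\preceq^\xi_{\star,R}\xi_2\iff G_R(\xi_1)\le G_R(\xi_2)$. If $R'$ is obtained from $R$ by a finite sequence of transformations each of which is a $k$-initial potential shaping (for some $k\in\mathbb{R}$), a positive linear scaling, or a mask of unreachable transitions, then $\preceq^\xi_{\star,R'}=\preceq^\xi_{\star,R}$.
   Context: An MDP has finite $\mathcal{S},\mathcal{A}$, $\tau:\mathcal{S}\times\mathcal{A}\to\Delta(\mathcal{S})$, $\mu_0\in\Delta(\mathcal{S})$, $R:\mathcal{S}\times\mathcal{A}\times\mathcal{S}\to\mathbb{R}$, $\gamma\in(0,1)$. A transition $(s,a,s')$ is possible if $\tau(s'\mid s,a)>0$. A trajectory $\xi=(s_0,a_0,s_1,\dots)$ is possible if all its transitions are possible and initial if $\mu_0(s_0)>0$; $G(\xi)=\sum_{t\ge0}\gamma^tR(s_t,a_t,s_{t+1})$. A transition is reachable if it occurs in some possible initial trajectory; mask of unreachable transitions: $R'(x)=R(x)$ for all reachable $x$. Positive linear scaling: $R'=cR$, $c>0$. A state is initial if $\mu_0(s)>0$, terminal (for $R$) if $\tau(s\mid s,a)=1$ and $R(s,a,s)=0$ for all $a$. $k$-initial potential shaping: $R'(s,a,s')=R(s,a,s')+\gamma\Phi(s')-\Phi(s)$ with $\Phi:\mathcal{S}\to\mathbb{R}$, $\Phi=0$ on terminal states, $\Phi=k$ on initial states. *)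

theory Defs
  imports "HOL-Probability.Probability_Mass_Function"
begin

text \<open>A trajectory is a pair of a state sequence and an
  action sequence: (s_0, a_0, s_1, a_1, ...).\<close>

type_synonym ('s, 'a) traj = "(nat \<Rightarrow> 's) \<times> (nat \<Rightarrow> 'a)"
type_synonym ('s, 'a) reward = "'s \<Rightarrow> 'a \<Rightarrow> 's \<Rightarrow> real"

definition possible_transition :: "('s \<Rightarrow> 'a \<Rightarrow> 's pmf) \<Rightarrow> 's \<Rightarrow> 'a \<Rightarrow> 's \<Rightarrow> bool" where
  "possible_transition \<tau> s a s' \<longleftrightarrow> pmf (\<tau> s a) s' > 0"

definition possible_traj :: "('s \<Rightarrow> 'a \<Rightarrow> 's pmf) \<Rightarrow> ('s, 'a) traj \<Rightarrow> bool" where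
  "possible_traj \<tau> \<xi> \<longleftrightarrow>
     (\<forall>t. possible_transition \<tau> (fst \<xi> t) (snd \<xi> t) (fst \<xi> (Suc t)))"

definition initial_traj :: "'s pmf \<Rightarrow> ('s, 'a) traj \<Rightarrow> bool" where
  "initial_traj \<mu>0 \<xi> \<longleftrightarrow> pmf \<mu>0 (fst \<xi> 0) > 0"

definition traj_return :: "real \<Rightarrow> ('s, 'a) reward \<Rightarrow> ('s, 'a) traj \<Rightarrow> real" where
  "traj_return \<gamma> R \<xi> = (\<Sum>t. \<gamma> ^ t * R (fst \<xi> t) (snd \<xi> t) (fst \<xi> (Suc t)))"

definition reachable_transition ::
  "('s \<Rightarrow> 'a \<Rightarrow> 's pmf) \<Rightarrow> 's pmf \<Rightarrow> 's \<Rightarrow> 'a \<Rightarrow> 's \<Rightarrow> bool" where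
  "reachable_transition \<tau> \<mu>0 s a s' \<longleftrightarrow>
     (\<exists>\<xi> t. possible_traj \<tau> \<xi> \<and> initial_traj \<mu>0 \<xi> \<and>
            fst \<xi> t = s \<and> snd \<xi> t = a \<and> fst \<xi> (Suc t) = s')"

definition initial_state :: "'s pmf \<Rightarrow> 's \<Rightarrow> bool" where
  "initial_state \<mu>0 s \<longleftrightarrow> pmf \<mu>0 s > 0"

definition terminal_state :: "('s \<Rightarrow> 'a \<Rightarrow> 's pmf) \<Rightarrow> ('s, 'a) reward \<Rightarrow> 's \<Rightarrow> bool" where
  "terminal_state \<tau> R s \<longleftrightarrow> (\<forall>a. pmf (\<tau> s a) s = 1 \<and> R s a s = 0)"

definition mask_unreachable ::
  "('s \<Rightarrow> 'a \<Rightarrow> 's pmf) \<Rightarrow> 's pmf \<Rightarrow> ('s, 'a) reward \<Rightarrow> ('s, 'a) reward \<Rightarrow> bool" where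
  "mask_unreachable \<tau> \<mu>0 R R' \<longleftrightarrow>
     (\<forall>s a s'. reachable_transition \<tau> \<mu>0 s a s' \<longrightarrow> R' s a s' = R s a s')"

definition positive_scaling :: "('s, 'a) reward \<Rightarrow> ('s, 'a) reward \<Rightarrow> bool" where
  "positive_scaling R R' \<longleftrightarrow> (\<exists>c::real. c > 0 \<and> R' = (\<lambda>s a s'. c * R s a s'))"

definition k_initial_shaping ::
  "('s \<Rightarrow> 'a \<Rightarrow> 's pmf) \<Rightarrow> 's pmf \<Rightarrow> real \<Rightarrow> real \<Rightarrow> ('s, 'a) reward \<Rightarrow> ('s, 'a) reward \<Rightarrow> bool" where
  "k_initial_shaping \<tau> \<mu>0 \<gamma> k R R' \<longleftrightarrow>
     (\<exists>\<Phi> :: 's \<Rightarrow> real.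
        (\<forall>s. terminal_state \<tau> R s \<longrightarrow> \<Phi> s = 0) \<and>
        (\<forall>s. initial_state \<mu>0 s \<longrightarrow> \<Phi> s = k) \<and>
        R' = (\<lambda>s a s'. R s a s' + \<gamma> * \<Phi> s' - \<Phi> s))"

definition transform_step ::
  "('s \<Rightarrow> 'a \<Rightarrow> 's pmf) \<Rightarrow> 's pmf \<Rightarrow> real \<Rightarrow> ('s, 'a) reward \<Rightarrow> ('s, 'a) reward \<Rightarrow> bool" where
  "transform_step \<tau> \<mu>0 \<gamma> R R' \<longleftrightarrow>
     (\<exists>k. k_initial_shaping \<tau> \<mu>0 \<gamma> k R R') \<or> positive_scaling R R' \<or>
     mask_unreachable \<tau> \<mu>0 R R'"

end

theory Submission
  imports Defs
begin

lemma bounded_fin: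
  fixes f :: "'x::finite \<Rightarrow> real"
  shows "\<exists>M. \<forall>x. \<bar>f x\<bar> \<le> M"
proof -
  have "\<forall>x. \<bar>f x\<bar> \<le> Max (range (\<lambda>x. \<bar>f x\<bar>))" by simp
  then show ?thesis by blast
qed

lemma ret_summable:
  fixes R :: "('s::finite, 'a::finite) reward"
  assumes "0 < \<gamma>" "\<gamma> < 1"
  shows "summable (\<lambda>t. \<gamma> ^ t * R (fst \<xi> t) (snd \<xi> t) (fst \<xi> (Suc t)))"
proof -
  obtain M where M: "\<forall>x. \<bar>(\<lambda>(s,a,s'). R s a s') x\<bar> \<le> M"
    using bounded_fin[of "\<lambda>(s,a,s'). R s a s'"] by blast
  have M': "\<bar>R s a s'\<bar> \<le> M" for s a s' using M[rule_format, of "(s,a,s')"] by simp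
  show ?thesis
  proof (rule summable_comparison_test[where g="\<lambda>t. M * \<gamma> ^ t"])
    show "\<exists>N. \<forall>n\<ge>N. norm (\<gamma> ^ n * R (fst \<xi> n) (snd \<xi> n) (fst \<xi> (Suc n))) \<le> M * \<gamma> ^ n"
      using M' assms by (auto simp: abs_mult mult.commute intro!: mult_right_mono)
    show "summable (\<lambda>t. M * \<gamma> ^ t)" using assms by (intro summable_mult summable_geometric) auto
  qed
qed

definition affine_rel where
  "affine_rel \<tau> \<mu>0 \<gamma> R R' \<longleftrightarrow> (\<exists>c>0. \<exists>b. \<forall>\<xi>. possible_traj \<tau> \<xi> \<and> initial_traj \<mu>0 \<xi> \<longrightarrow>
      traj_return \<gamma> R' \<xi> = c * traj_return \<gamma> R \<xi> + b)"

lemma step_affine: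
  fixes \<tau> :: "'s::finite \<Rightarrow> 'a::finite \<Rightarrow> 's pmf"
  assumes g: "0 < \<gamma>" "\<gamma> < 1" and st: "transform_step \<tau> \<mu>0 \<gamma> R R'"
  shows "affine_rel \<tau> \<mu>0 \<gamma> R R'"
  using st unfolding transform_step_def
proof (elim disjE exE)
  fix k assume "k_initial_shaping \<tau> \<mu>0 \<gamma> k R R'"
  then obtain \<Phi> where ini: "\<forall>s. initial_state \<mu>0 s \<longrightarrow> \<Phi> s = k"
    and R': "R' = (\<lambda>s a s'. R s a s' + \<gamma> * \<Phi> s' - \<Phi> s)"
    unfolding k_initial_shaping_def by blast
  have "traj_return \<gamma> R' \<xi> = 1 * traj_return \<gamma> R \<xi> + (- k)"
    if "possible_traj \<tau> \<xi>" "initial_traj \<mu>0 \<xi>" for \<xi>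
  proof -
    let ?s = "fst \<xi>" and ?a = "snd \<xi>"
    let ?f = "\<lambda>n. \<gamma> ^ n * \<Phi> (?s n)"
    obtain M where M: "\<forall>x. \<bar>\<Phi> x\<bar> \<le> M" using bounded_fin by blast
    have "?f \<longlonglongrightarrow> 0"
    proof (rule Lim_null_comparison[where g="\<lambda>n. M * \<gamma> ^ n"])
      show "\<forall>\<^sub>F n in sequentially. norm (?f n) \<le> M * \<gamma> ^ n"
        using M g by (auto simp: abs_mult mult.commute intro!: mult_right_mono)
      show "(\<lambda>n. M * \<gamma> ^ n) \<longlonglongrightarrow> 0" using g
        by (intro tendsto_mult_right_zero LIMSEQ_power_zero) auto
    qed
    then have tel: "(\<lambda>n. ?f (Suc n) - ?f n) sums (0 - ?f 0)" by (rule telescope_sums)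
    have k0: "\<Phi> (?s 0) = k" using ini that(2) by (simp add: initial_state_def initial_traj_def)
    have sR: "(\<lambda>t. \<gamma> ^ t * R (?s t) (?a t) (?s (Suc t))) sums traj_return \<gamma> R \<xi>"
      unfolding traj_return_def using ret_summable[OF g] by (rule summable_sums)
    have "(\<lambda>t. \<gamma> ^ t * R (?s t) (?a t) (?s (Suc t)) + (?f (Suc t) - ?f t)) sums (traj_return \<gamma> R \<xi> + (0 - ?f 0))"
      by (rule sums_add[OF sR tel])
    moreover have "(\<lambda>t. \<gamma> ^ t * R (?s t) (?a t) (?s (Suc t)) + (?f (Suc t) - ?f t)) =
        (\<lambda>t. \<gamma> ^ t * R' (?s t) (?a t) (?s (Suc t)))"
      by (rule ext) (simp add: R' algebra_simps)
    ultimately have "(\<lambda>t. \<gamma> ^ t * R' (?s t) (?a t) (?s (Suc t))) sums (traj_return \<gamma> R \<xi> - k)"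
      using k0 by simp
    then show ?thesis unfolding traj_return_def by (simp add: sums_iff)
  qed
  then show "affine_rel \<tau> \<mu>0 \<gamma> R R'" unfolding affine_rel_def by (intro exI[of _ 1]) auto
next
  assume "positive_scaling R R'"
  then obtain c where c: "c > 0" "R' = (\<lambda>s a s'. c * R s a s')"
    unfolding positive_scaling_def by blast
  have "traj_return \<gamma> R' \<xi> = c * traj_return \<gamma> R \<xi> + 0" for \<xi>
    unfolding traj_return_def c(2)
    using suminf_mult[OF ret_summable[OF g, of R \<xi>], of c]
    by (simp add: algebra_simps)
  then show "affine_rel \<tau> \<mu>0 \<gamma> R R'" unfolding affine_rel_def using c(1) by blast
next
  assume m: "mask_unreachable \<tau> \<mu>0 R R'"
  have "traj_return \<gamma> R' \<xi> = 1 * traj_return \<gamma> R \<xi> + 0"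
    if "possible_traj \<tau> \<xi>" "initial_traj \<mu>0 \<xi>" for \<xi>
  proof -
    have "R' (fst \<xi> t) (snd \<xi> t) (fst \<xi> (Suc t)) = R (fst \<xi> t) (snd \<xi> t) (fst \<xi> (Suc t))" for t
      using m that unfolding mask_unreachable_def reachable_transition_def by blast
    then show ?thesis unfolding traj_return_def by simp
  qed
  then show "affine_rel \<tau> \<mu>0 \<gamma> R R'" unfolding affine_rel_def by (intro exI[of _ 1]) auto
qed

lemma affine_trans:
  assumes "affine_rel \<tau> \<mu>0 \<gamma> R R'" "affine_rel \<tau> \<mu>0 \<gamma> R' R''"
  shows "affine_rel \<tau> \<mu>0 \<gamma> R R''"
proof -
  obtain c b where cb: "c > 0" "\<forall>\<xi>. possible_traj \<tau> \<xi> \<and> initial_traj \<mu>0 \<xi> \<longrightarrow>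
      traj_return \<gamma> R' \<xi> = c * traj_return \<gamma> R \<xi> + b"
    using assms(1) unfolding affine_rel_def by blast
  obtain d e where de: "d > 0" "\<forall>\<xi>. possible_traj \<tau> \<xi> \<and> initial_traj \<mu>0 \<xi> \<longrightarrow>
      traj_return \<gamma> R'' \<xi> = d * traj_return \<gamma> R' \<xi> + e"
    using assms(2) unfolding affine_rel_def by blast
  have "\<forall>\<xi>. possible_traj \<tau> \<xi> \<and> initial_traj \<mu>0 \<xi> \<longrightarrow>
      traj_return \<gamma> R'' \<xi> = (d * c) * traj_return \<gamma> R \<xi> + (d * b + e)"
    using cb de by (simp add: algebra_simps)
  then show ?thesis unfolding affine_rel_def using cb de by (meson mult_pos_pos)
qed

theorem theorem3p14:
  fixes \<tau> :: "'s::finite \<Rightarrow> 'a::finite \<Rightarrow> 's pmf"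
    and \<mu>0 :: "'s pmf"
    and \<gamma> :: real
    and R R' :: "('s, 'a) reward"
  assumes "0 < \<gamma>" and "\<gamma> < 1"
    and "(transform_step \<tau> \<mu>0 \<gamma>)\<^sup>*\<^sup>* R R'"
  shows "\<forall>\<xi>1 \<xi>2. possible_traj \<tau> \<xi>1 \<and> initial_traj \<mu>0 \<xi>1 \<and>
                 possible_traj \<tau> \<xi>2 \<and> initial_traj \<mu>0 \<xi>2 \<longrightarrow>
           (traj_return \<gamma> R' \<xi>1 \<le> traj_return \<gamma> R' \<xi>2 \<longleftrightarrow>
            traj_return \<gamma> R \<xi>1 \<le> traj_return \<gamma> R \<xi>2)"
proof -
  have "affine_rel \<tau> \<mu>0 \<gamma> R R'"
    using assms(3)
  proof (induction rule: rtranclp_induct)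
    case base
    then show ?case unfolding affine_rel_def by (intro exI[of _ 1]) auto
  next
    case (step y z)
    then show ?case using affine_trans step_affine[OF assms(1,2)] by blast
  qed
  then obtain c b where cb: "c > 0" "\<forall>\<xi>. possible_traj \<tau> \<xi> \<and> initial_traj \<mu>0 \<xi> \<longrightarrow>
      traj_return \<gamma> R' \<xi> = c * traj_return \<gamma> R \<xi> + b"
    unfolding affine_rel_def by blast
  then show ?thesis by auto
qed

end
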